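(* Let $G$ be a finitely generated torsion-free nilpotent group and suppose the decomposition $\overline{G}=R_1\times R_2$ into rational subgroups matches the decomposition $G=G_1\times G_2$. Then $\overline{G}=R_1\times R_2$ gives rise to a decomposition of $G/Z(G)$; that is, with $X_i=R_iZ(\overline{G})\cap G$, we have $G=X_1X_2$, $[X_1,X_2]=1$ and $X_1\cap X_2=Z(G)$.
   Context: $\overline{G}$ is the rational closure of $G$ (torsion-free nilpotent, containing $G$, uniquely divisible, each element has a positive power in $G$); for $H\le G$, $\overline{H}$ is the set of elements of $\overline{G}$ having a positive power in $H$. A subgroup is rational if closed under taking all $n$-th roots. A decomposition $\overline{G}=R_1\times R_2$ matches $G=G_1\times G_2$ if $\overline{G_i}\,Z(\overline{G})=R_i\,Z(\overline{G})$ for $i=1,2$. *)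

theory Defs
  imports "HOL-Algebra.Algebra"
begin

definition commutator :: "('a, 'b) monoid_scheme \<Rightarrow> 'a \<Rightarrow> 'a \<Rightarrow> 'a" where
  "commutator G x y = x \<otimes>\<^bsub>G\<^esub> y \<otimes>\<^bsub>G\<^esub> inv\<^bsub>G\<^esub> x \<otimes>\<^bsub>G\<^esub> inv\<^bsub>G\<^esub> y"

text \<open>Lower central series: gamma_1 = G (index 0 here), gamma_{i+1} = [gamma_i, G].\<close>
fun lower_central :: "('a, 'b) monoid_scheme \<Rightarrow> nat \<Rightarrow> 'a set" where
  "lower_central G 0 = carrier G"
| "lower_central G (Suc n) =
     generate G {commutator G x y | x y. x \<in> lower_central G n \<and> y \<in> carrier G}"

definition nilpotent_group :: "('a, 'b) monoid_scheme \<Rightarrow> bool" where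
  "nilpotent_group G \<longleftrightarrow> group G \<and> (\<exists>n. lower_central G n = {\<one>\<^bsub>G\<^esub>})"

definition torsion_free :: "('a, 'b) monoid_scheme \<Rightarrow> bool" where
  "torsion_free G \<longleftrightarrow> (\<forall>x\<in>carrier G. \<forall>n::nat. n > 0 \<longrightarrow> x [^]\<^bsub>G\<^esub> n = \<one>\<^bsub>G\<^esub> \<longrightarrow> x = \<one>\<^bsub>G\<^esub>)"

definition finitely_generated :: "('a, 'b) monoid_scheme \<Rightarrow> bool" where
  "finitely_generated G \<longleftrightarrow> (\<exists>S. finite S \<and> S \<subseteq> carrier G \<and> generate G S = carrier G)"

definition uniquely_divisible :: "('a, 'b) monoid_scheme \<Rightarrow> bool" where
  "uniquely_divisible G \<longleftrightarrow>
     (\<forall>x\<in>carrier G. \<forall>n::nat. n > 0 \<longrightarrow> (\<exists>!y. y \<in> carrier G \<and> y [^]\<^bsub>G\<^esub> n = x))"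

definition center :: "('a, 'b) monoid_scheme \<Rightarrow> 'a set" where
  "center G = {z \<in> carrier G. \<forall>x\<in>carrier G. z \<otimes>\<^bsub>G\<^esub> x = x \<otimes>\<^bsub>G\<^esub> z}"

definition rational_closure_of :: "('a, 'b) monoid_scheme \<Rightarrow> 'a set \<Rightarrow> bool" where
  "rational_closure_of Gb H \<longleftrightarrow>
     nilpotent_group Gb \<and> torsion_free Gb \<and> subgroup H Gb \<and> uniquely_divisible Gb \<and>
     (\<forall>x\<in>carrier Gb. \<exists>n::nat. n > 0 \<and> x [^]\<^bsub>Gb\<^esub> n \<in> H)"

definition rat_closure_set :: "('a, 'b) monoid_scheme \<Rightarrow> 'a set \<Rightarrow> 'a set" where
  "rat_closure_set Gb H = {x \<in> carrier Gb. \<exists>n::nat. n > 0 \<and> x [^]\<^bsub>Gb\<^esub> n \<in> H}"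

definition rational_subgroup :: "'a set \<Rightarrow> ('a, 'b) monoid_scheme \<Rightarrow> bool" where
  "rational_subgroup R G \<longleftrightarrow> subgroup R G \<and>
     (\<forall>x\<in>carrier G. \<forall>n::nat. n > 0 \<longrightarrow> x [^]\<^bsub>G\<^esub> n \<in> R \<longrightarrow> x \<in> R)"

definition internal_direct_product :: "('a, 'b) monoid_scheme \<Rightarrow> 'a set \<Rightarrow> 'a set \<Rightarrow> 'a set \<Rightarrow> bool" where
  "internal_direct_product G H A B \<longleftrightarrow>
     subgroup A G \<and> subgroup B G \<and> A \<subseteq> H \<and> B \<subseteq> H \<and>
     A <#>\<^bsub>G\<^esub> B = H \<and> A \<inter> B = {\<one>\<^bsub>G\<^esub>} \<and>
     (\<forall>a\<in>A. \<forall>b\<in>B. a \<otimes>\<^bsub>G\<^esub> b = b \<otimes>\<^bsub>G\<^esub> a)"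

end

theory Submission
  imports Defs
begin

lemma conj_pow:
  assumes "group G" "g \<in> carrier G" "x \<in> carrier G"
  shows "(g \<otimes>\<^bsub>G\<^esub> x \<otimes>\<^bsub>G\<^esub> inv\<^bsub>G\<^esub> g) [^]\<^bsub>G\<^esub> (n::nat) = g \<otimes>\<^bsub>G\<^esub> x [^]\<^bsub>G\<^esub> n \<otimes>\<^bsub>G\<^esub> inv\<^bsub>G\<^esub> g"
proof -
  interpret group G by fact
  have ig: "\<And>y. y \<in> carrier G \<Longrightarrow> inv\<^bsub>G\<^esub> g \<otimes>\<^bsub>G\<^esub> (g \<otimes>\<^bsub>G\<^esub> y) = y"
    using assms by (simp add: m_assoc[symmetric])
  show ?thesis
  proof (induction n)
    case 0
    then show ?case using assms by simp
  next
    case (Suc n)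
    show ?case using Suc assms by (simp add: m_assoc ig)
  qed
qed

lemma center_comm:
  assumes "group Gb" "uniquely_divisible Gb" "g \<in> carrier Gb" "x \<in> carrier Gb"
    "n > 0" "g \<otimes>\<^bsub>Gb\<^esub> x [^]\<^bsub>Gb\<^esub> (n::nat) = x [^]\<^bsub>Gb\<^esub> n \<otimes>\<^bsub>Gb\<^esub> g"
  shows "g \<otimes>\<^bsub>Gb\<^esub> x = x \<otimes>\<^bsub>Gb\<^esub> g"
proof -
  interpret group Gb by fact
  have xn: "x [^]\<^bsub>Gb\<^esub> n \<in> carrier Gb" using assms by simp
  have e: "g \<otimes>\<^bsub>Gb\<^esub> x [^]\<^bsub>Gb\<^esub> n \<otimes>\<^bsub>Gb\<^esub> inv\<^bsub>Gb\<^esub> g = x [^]\<^bsub>Gb\<^esub> n"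
  proof -
    have "g \<otimes>\<^bsub>Gb\<^esub> x [^]\<^bsub>Gb\<^esub> n \<otimes>\<^bsub>Gb\<^esub> inv\<^bsub>Gb\<^esub> g = x [^]\<^bsub>Gb\<^esub> n \<otimes>\<^bsub>Gb\<^esub> g \<otimes>\<^bsub>Gb\<^esub> inv\<^bsub>Gb\<^esub> g" using assms(6) by simp
    also have "\<dots> = x [^]\<^bsub>Gb\<^esub> n" using xn assms(3) by (simp add: m_assoc)
    finally show ?thesis .
  qed
  have p: "(g \<otimes>\<^bsub>Gb\<^esub> x \<otimes>\<^bsub>Gb\<^esub> inv\<^bsub>Gb\<^esub> g) [^]\<^bsub>Gb\<^esub> n = x [^]\<^bsub>Gb\<^esub> n"
    using conj_pow[OF assms(1,3,4)] e by simp
  have U: "\<And>y1 y2. y1 \<in> carrier Gb \<Longrightarrow> y1 [^]\<^bsub>Gb\<^esub> n = x [^]\<^bsub>Gb\<^esub> n \<Longrightarrow> y2 \<in> carrier Gb \<Longrightarrow> y2 [^]\<^bsub>Gb\<^esub> n = x [^]\<^bsub>Gb\<^esub> n \<Longrightarrow> y1 = y2"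
    using assms(2,5) xn unfolding uniquely_divisible_def by blast
  have e2: "g \<otimes>\<^bsub>Gb\<^esub> x \<otimes>\<^bsub>Gb\<^esub> inv\<^bsub>Gb\<^esub> g = x"
    by (rule U) (use p assms(3,4) in auto)
  have "g \<otimes>\<^bsub>Gb\<^esub> x = g \<otimes>\<^bsub>Gb\<^esub> x \<otimes>\<^bsub>Gb\<^esub> inv\<^bsub>Gb\<^esub> g \<otimes>\<^bsub>Gb\<^esub> g" using assms(3,4) by (simp add: m_assoc)
  then show ?thesis using e2 by simp

qed

theorem mainTheorem12:
  fixes Gb :: "('a, 'b) monoid_scheme" and G G1 G2 R1 R2 :: "'a set"
  assumes "group Gb"
    and "subgroup G Gb"
    and "finitely_generated (Gb\<lparr>carrier := G\<rparr>)"
    and "nilpotent_group (Gb\<lparr>carrier := G\<rparr>)"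
    and "torsion_free (Gb\<lparr>carrier := G\<rparr>)"
    and "rational_closure_of Gb G"
    and "rational_subgroup R1 Gb" and "rational_subgroup R2 Gb"
    and "internal_direct_product Gb (carrier Gb) R1 R2"
    and "internal_direct_product Gb G G1 G2"
    and "rat_closure_set Gb G1 <#>\<^bsub>Gb\<^esub> center Gb = R1 <#>\<^bsub>Gb\<^esub> center Gb"
    and "rat_closure_set Gb G2 <#>\<^bsub>Gb\<^esub> center Gb = R2 <#>\<^bsub>Gb\<^esub> center Gb"
  shows "let X1 = (R1 <#>\<^bsub>Gb\<^esub> center Gb) \<inter> G;
             X2 = (R2 <#>\<^bsub>Gb\<^esub> center Gb) \<inter> G
         in G = X1 <#>\<^bsub>Gb\<^esub> X2
            \<and> (\<forall>x1\<in>X1. \<forall>x2\<in>X2. x1 \<otimes>\<^bsub>Gb\<^esub> x2 = x2 \<otimes>\<^bsub>Gb\<^esub> x1)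
            \<and> X1 \<inter> X2 = center (Gb\<lparr>carrier := G\<rparr>)"
proof -
  interpret group Gb by fact
  interpret GS: subgroup G Gb by fact
  define Z where "Z = center Gb"
  define X1 where "X1 = (R1 <#>\<^bsub>Gb\<^esub> Z) \<inter> G"
  define X2 where "X2 = (R2 <#>\<^bsub>Gb\<^esub> Z) \<inter> G"
  have R1: "subgroup R1 Gb" and R2: "subgroup R2 Gb"
    and R12: "R1 <#>\<^bsub>Gb\<^esub> R2 = carrier Gb" and Rc: "\<forall>a\<in>R1. \<forall>b\<in>R2. a \<otimes>\<^bsub>Gb\<^esub> b = b \<otimes>\<^bsub>Gb\<^esub> a"
    using assms(9) unfolding internal_direct_product_def by auto
  have G1: "subgroup G1 Gb" and G2: "subgroup G2 Gb" and G12: "G1 <#>\<^bsub>Gb\<^esub> G2 = G"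
    using assms(10) unfolding internal_direct_product_def by auto
  have ud: "uniquely_divisible Gb" using assms(6) unfolding rational_closure_of_def by blast
  have roots: "\<forall>x\<in>carrier Gb. \<exists>n::nat. n > 0 \<and> x [^]\<^bsub>Gb\<^esub> n \<in> G"
    using assms(6) unfolding rational_closure_of_def by blast
  have Zc: "Z \<subseteq> carrier Gb" unfolding Z_def center_def by auto
  have oneZ: "\<one>\<^bsub>Gb\<^esub> \<in> Z" unfolding Z_def center_def by auto
  have R1c: "R1 \<subseteq> carrier Gb" using R1 subgroup.subset by blast
  have R2c: "R2 \<subseteq> carrier Gb" using R2 subgroup.subset by blast
  have Y1: "y \<in> R1 <#>\<^bsub>Gb\<^esub> Z \<longleftrightarrow> (\<exists>r\<in>R1. \<exists>z\<in>Z. y = r \<otimes>\<^bsub>Gb\<^esub> z)" for y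
    unfolding set_mult_def by auto
  have Y2: "y \<in> R2 <#>\<^bsub>Gb\<^esub> Z \<longleftrightarrow> (\<exists>r\<in>R2. \<exists>z\<in>Z. y = r \<otimes>\<^bsub>Gb\<^esub> z)" for y
    unfolding set_mult_def by auto
  have zcomm: "z \<in> Z \<Longrightarrow> x \<in> carrier Gb \<Longrightarrow> z \<otimes>\<^bsub>Gb\<^esub> x = x \<otimes>\<^bsub>Gb\<^esub> z" for z x
    unfolding Z_def center_def by auto
  have comm: "\<forall>x1\<in>X1. \<forall>x2\<in>X2. x1 \<otimes>\<^bsub>Gb\<^esub> x2 = x2 \<otimes>\<^bsub>Gb\<^esub> x1"
  proof (intro ballI)
    fix x1 x2 assume "x1 \<in> X1" "x2 \<in> X2"
    then obtain r1 z1 r2 z2 where h: "r1 \<in> R1" "z1 \<in> Z" "x1 = r1 \<otimes>\<^bsub>Gb\<^esub> z1"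
      "r2 \<in> R2" "z2 \<in> Z" "x2 = r2 \<otimes>\<^bsub>Gb\<^esub> z2"
      by (auto simp: X1_def X2_def Y1 Y2)
    have c: "r1 \<in> carrier Gb" "r2 \<in> carrier Gb" "z1 \<in> carrier Gb" "z2 \<in> carrier Gb"
      using h R1c R2c Zc by auto
    have "x1 \<otimes>\<^bsub>Gb\<^esub> x2 = r1 \<otimes>\<^bsub>Gb\<^esub> (z1 \<otimes>\<^bsub>Gb\<^esub> r2) \<otimes>\<^bsub>Gb\<^esub> z2" using c h by (simp add: m_assoc)
    also have "\<dots> = r1 \<otimes>\<^bsub>Gb\<^esub> r2 \<otimes>\<^bsub>Gb\<^esub> (z1 \<otimes>\<^bsub>Gb\<^esub> z2)" using c h zcomm[of z1 r2] by (simp add: m_assoc)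
    also have "\<dots> = r2 \<otimes>\<^bsub>Gb\<^esub> r1 \<otimes>\<^bsub>Gb\<^esub> (z1 \<otimes>\<^bsub>Gb\<^esub> z2)" using Rc[rule_format, OF h(1) h(4)] by simp
    also have "\<dots> = r2 \<otimes>\<^bsub>Gb\<^esub> r1 \<otimes>\<^bsub>Gb\<^esub> (z2 \<otimes>\<^bsub>Gb\<^esub> z1)" using zcomm[OF h(2) c(4)] by simp
    also have "\<dots> = r2 \<otimes>\<^bsub>Gb\<^esub> (z2 \<otimes>\<^bsub>Gb\<^esub> r1) \<otimes>\<^bsub>Gb\<^esub> z1" using c h zcomm[of z2 r1] by (simp add: m_assoc)
    also have "\<dots> = x2 \<otimes>\<^bsub>Gb\<^esub> x1" using c h by (simp add: m_assoc)
    finally show "x1 \<otimes>\<^bsub>Gb\<^esub> x2 = x2 \<otimes>\<^bsub>Gb\<^esub> x1" .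
  qed
  have G1X1: "G1 \<subseteq> X1"
  proof
    fix g assume g: "g \<in> G1"
    have gc: "g \<in> carrier Gb" using g G1 subgroup.subset by blast
    have "g \<in> rat_closure_set Gb G1" unfolding rat_closure_set_def using g gc
      by (auto intro!: exI[of _ "1::nat"])
    then have "g \<otimes>\<^bsub>Gb\<^esub> \<one>\<^bsub>Gb\<^esub> \<in> rat_closure_set Gb G1 <#>\<^bsub>Gb\<^esub> Z" using oneZ unfolding set_mult_def by blast
    then have "g \<in> R1 <#>\<^bsub>Gb\<^esub> Z" using gc assms(11) Z_def by simp
    moreover have "g \<in> G" using G12 g unfolding set_mult_def using G2 subgroup.one_closed gc by fastforce
    ultimately show "g \<in> X1" unfolding X1_def by blast
  qed
  have G2X2: "G2 \<subseteq> X2"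
  proof
    fix g assume g: "g \<in> G2"
    have gc: "g \<in> carrier Gb" using g G2 subgroup.subset by blast
    have "g \<in> rat_closure_set Gb G2" unfolding rat_closure_set_def using g gc
      by (auto intro!: exI[of _ "1::nat"])
    then have "g \<otimes>\<^bsub>Gb\<^esub> \<one>\<^bsub>Gb\<^esub> \<in> rat_closure_set Gb G2 <#>\<^bsub>Gb\<^esub> Z" using oneZ unfolding set_mult_def by blast
    then have "g \<in> R2 <#>\<^bsub>Gb\<^esub> Z" using gc assms(12) Z_def by simp
    moreover have "\<one>\<^bsub>Gb\<^esub> \<otimes>\<^bsub>Gb\<^esub> g \<in> G" using G12 g unfolding set_mult_def using G1 subgroup.one_closed gc by fastforce
    ultimately show "g \<in> X2" unfolding X2_def using gc by simp
  qed
  have prod: "G = X1 <#>\<^bsub>Gb\<^esub> X2"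
  proof
    show "G \<subseteq> X1 <#>\<^bsub>Gb\<^esub> X2" using G12 G1X1 G2X2 unfolding set_mult_def by blast
    show "X1 <#>\<^bsub>Gb\<^esub> X2 \<subseteq> G" unfolding set_mult_def X1_def X2_def by auto
  qed
  have inter: "X1 \<inter> X2 = center (Gb\<lparr>carrier := G\<rparr>)"
  proof
    show "X1 \<inter> X2 \<subseteq> center (Gb\<lparr>carrier := G\<rparr>)"
    proof
      fix x assume "x \<in> X1 \<inter> X2"
      then obtain r1 z1 r2 z2 where h: "r1 \<in> R1" "z1 \<in> Z" "x = r1 \<otimes>\<^bsub>Gb\<^esub> z1"
        "r2 \<in> R2" "z2 \<in> Z" "x = r2 \<otimes>\<^bsub>Gb\<^esub> z2" and xG: "x \<in> G"
        by (auto simp: X1_def X2_def Y1 Y2)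
      have c: "r1 \<in> carrier Gb" "r2 \<in> carrier Gb" "z1 \<in> carrier Gb" "z2 \<in> carrier Gb"
        using h R1c R2c Zc by auto
      define w where "w = z2 \<otimes>\<^bsub>Gb\<^esub> inv\<^bsub>Gb\<^esub> z1"
      have wc: "w \<in> carrier Gb" using c w_def by simp
      have wZ: "\<And>y. y \<in> carrier Gb \<Longrightarrow> w \<otimes>\<^bsub>Gb\<^esub> y = y \<otimes>\<^bsub>Gb\<^esub> w"
      proof -
        fix y assume y: "y \<in> carrier Gb"
        have "inv\<^bsub>Gb\<^esub> z1 \<otimes>\<^bsub>Gb\<^esub> y = inv\<^bsub>Gb\<^esub> z1 \<otimes>\<^bsub>Gb\<^esub> (y \<otimes>\<^bsub>Gb\<^esub> z1) \<otimes>\<^bsub>Gb\<^esub> inv\<^bsub>Gb\<^esub> z1" using c y by (simp add: m_assoc)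
        also have "\<dots> = inv\<^bsub>Gb\<^esub> z1 \<otimes>\<^bsub>Gb\<^esub> (z1 \<otimes>\<^bsub>Gb\<^esub> y) \<otimes>\<^bsub>Gb\<^esub> inv\<^bsub>Gb\<^esub> z1" using zcomm[OF h(2) y] by simp
        also have "\<dots> = y \<otimes>\<^bsub>Gb\<^esub> inv\<^bsub>Gb\<^esub> z1" using c y by (simp add: m_assoc[symmetric])
        finally have iz: "inv\<^bsub>Gb\<^esub> z1 \<otimes>\<^bsub>Gb\<^esub> y = y \<otimes>\<^bsub>Gb\<^esub> inv\<^bsub>Gb\<^esub> z1" .


        have "w \<otimes>\<^bsub>Gb\<^esub> y = z2 \<otimes>\<^bsub>Gb\<^esub> (inv\<^bsub>Gb\<^esub> z1 \<otimes>\<^bsub>Gb\<^esub> y)" unfolding w_def using c y by (simp add: m_assoc)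
        also have "\<dots> = z2 \<otimes>\<^bsub>Gb\<^esub> y \<otimes>\<^bsub>Gb\<^esub> inv\<^bsub>Gb\<^esub> z1" using iz c y by (simp add: m_assoc)
        also have "\<dots> = y \<otimes>\<^bsub>Gb\<^esub> z2 \<otimes>\<^bsub>Gb\<^esub> inv\<^bsub>Gb\<^esub> z1" using zcomm[OF h(5) y] by simp
        finally show "w \<otimes>\<^bsub>Gb\<^esub> y = y \<otimes>\<^bsub>Gb\<^esub> w" unfolding w_def using c y by (simp add: m_assoc)

      qed
      have r1eq: "r1 = r2 \<otimes>\<^bsub>Gb\<^esub> w"
      proof -
        have "r1 = r1 \<otimes>\<^bsub>Gb\<^esub> z1 \<otimes>\<^bsub>Gb\<^esub> inv\<^bsub>Gb\<^esub> z1" using c by (simp add: m_assoc)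
        also have "\<dots> = r2 \<otimes>\<^bsub>Gb\<^esub> z2 \<otimes>\<^bsub>Gb\<^esub> inv\<^bsub>Gb\<^esub> z1" using h by simp
        finally show ?thesis using c w_def by (simp add: m_assoc)
      qed
      have r1cen: "r1 \<otimes>\<^bsub>Gb\<^esub> y = y \<otimes>\<^bsub>Gb\<^esub> r1" if y: "y \<in> carrier Gb" for y
      proof -
        obtain a b where ab: "a \<in> R1" "b \<in> R2" "y = a \<otimes>\<^bsub>Gb\<^esub> b"
          using y R12[symmetric] unfolding set_mult_def by blast
        have abc: "a \<in> carrier Gb" "b \<in> carrier Gb" using ab R1c R2c by auto
        have ra: "r1 \<otimes>\<^bsub>Gb\<^esub> a = a \<otimes>\<^bsub>Gb\<^esub> r1"
        proof -
          have "r1 \<otimes>\<^bsub>Gb\<^esub> a = r2 \<otimes>\<^bsub>Gb\<^esub> (w \<otimes>\<^bsub>Gb\<^esub> a)" using r1eq c wc abc by (simp add: m_assoc)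
          also have "\<dots> = r2 \<otimes>\<^bsub>Gb\<^esub> a \<otimes>\<^bsub>Gb\<^esub> w" using wZ[of a] c wc abc by (simp add: m_assoc)
          also have "\<dots> = a \<otimes>\<^bsub>Gb\<^esub> r2 \<otimes>\<^bsub>Gb\<^esub> w" using Rc[rule_format, OF ab(1) h(4)] by simp
          also have "\<dots> = a \<otimes>\<^bsub>Gb\<^esub> r1" using r1eq c wc abc by (simp add: m_assoc)
          finally show ?thesis .
        qed
        have rb: "r1 \<otimes>\<^bsub>Gb\<^esub> b = b \<otimes>\<^bsub>Gb\<^esub> r1" using Rc[rule_format, OF h(1) ab(2)] by simp
        have "r1 \<otimes>\<^bsub>Gb\<^esub> y = r1 \<otimes>\<^bsub>Gb\<^esub> a \<otimes>\<^bsub>Gb\<^esub> b" using ab abc c by (simp add: m_assoc)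
        also have "\<dots> = a \<otimes>\<^bsub>Gb\<^esub> (r1 \<otimes>\<^bsub>Gb\<^esub> b)" using ra abc c by (simp add: m_assoc)
        also have "\<dots> = y \<otimes>\<^bsub>Gb\<^esub> r1" using rb ab abc c by (simp add: m_assoc)
        finally show ?thesis .
      qed
      have xcen: "x \<otimes>\<^bsub>Gb\<^esub> y = y \<otimes>\<^bsub>Gb\<^esub> x" if y: "y \<in> carrier Gb" for y
      proof -
        have "x \<otimes>\<^bsub>Gb\<^esub> y = r1 \<otimes>\<^bsub>Gb\<^esub> (z1 \<otimes>\<^bsub>Gb\<^esub> y)" using h c y by (simp add: m_assoc)
        also have "\<dots> = r1 \<otimes>\<^bsub>Gb\<^esub> y \<otimes>\<^bsub>Gb\<^esub> z1" using zcomm[OF h(2) y] c y by (simp add: m_assoc)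
        also have "\<dots> = y \<otimes>\<^bsub>Gb\<^esub> x" using r1cen[OF y] h c y by (simp add: m_assoc)
        finally show ?thesis .
      qed
      show "x \<in> center (Gb\<lparr>carrier := G\<rparr>)" unfolding center_def using xG xcen GS.subset by auto
    qed
    show "center (Gb\<lparr>carrier := G\<rparr>) \<subseteq> X1 \<inter> X2"
    proof
      fix g assume "g \<in> center (Gb\<lparr>carrier := G\<rparr>)"
      then have gG: "g \<in> G" and gc0: "\<forall>x\<in>G. g \<otimes>\<^bsub>Gb\<^esub> x = x \<otimes>\<^bsub>Gb\<^esub> g" unfolding center_def by auto
      have gc: "g \<in> carrier Gb" using gG GS.subset by blast
      have gZ: "g \<in> Z" unfolding Z_def center_def
      proof (intro CollectI conjI ballI gc)
        fix x assume x: "x \<in> carrier Gb"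
        obtain n :: nat where n: "n > 0" "x [^]\<^bsub>Gb\<^esub> n \<in> G" using roots x by blast
        show "g \<otimes>\<^bsub>Gb\<^esub> x = x \<otimes>\<^bsub>Gb\<^esub> g" using center_comm[OF assms(1) ud gc x n(1)] gc0 n(2) by blast
      qed
      have "\<one>\<^bsub>Gb\<^esub> \<otimes>\<^bsub>Gb\<^esub> g \<in> R1 <#>\<^bsub>Gb\<^esub> Z" using R1 subgroup.one_closed gZ unfolding set_mult_def by blast
      moreover have "\<one>\<^bsub>Gb\<^esub> \<otimes>\<^bsub>Gb\<^esub> g \<in> R2 <#>\<^bsub>Gb\<^esub> Z" using R2 subgroup.one_closed gZ unfolding set_mult_def by blast
      ultimately show "g \<in> X1 \<inter> X2" unfolding X1_def X2_def using gG gc by simp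
    qed
  qed
  show ?thesis using prod comm inter unfolding Let_def X1_def X2_def Z_def by simp
qed

end
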